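(* Let $\alpha,\beta\in\mathbb{C}$ with $\Re(\alpha)>-1$ and $\Re(\beta)>-1$, and let $t\in\mathbb{C}$. Then for all $z\in\mathbb{C}$ with $|z|<1$, $$\frac{\partial }{\partial z} {\rm B}_{n}^{(\alpha ,\beta )} (z,1)-\frac{t}{1+\alpha}\, {\rm B}_{n}^{(1+\alpha ,\beta )} (z,1)-\frac{t}{1+\beta}\, {\rm B}_{n}^{(\alpha ,1+\beta )} (z,1)=0 .$$
   Context: For $\lambda\in\mathbb{C}$ and an integer $m\ge 0$, $(\lambda)_m$ denotes the Pochhammer symbol: $(\lambda)_0=1$ and $(\lambda)_m=\lambda(\lambda+1)\cdots(\lambda+m-1)$ for $m\ge1$. For a fixed parameter $t\in\mathbb{C}$ and $\alpha,\beta\in\mathbb{C}$ with $\Re(\alpha)>-1$, $\Re(\beta)>-1$, define $${\rm B}_{n}^{(\alpha ,\beta )} (z,1)=\left[\sum _{m=0}^{\infty } \frac{\tfrac{1}{2} \left(z-1 \right)^{m} t^{m}}{m!\,(1+\alpha)_{m} } \right]\left[\sum _{m=0}^{\infty }\frac{\tfrac{1}{2} \left(z+1 \right)^{m} t^{m}}{m!\,(1+\beta)_{m} } \right]$$ (the index $n$ is nominal; the right-hand side does not depend on it). ${\rm B}_{n}^{(1+\alpha ,\beta)}(z,1)$ and ${\rm B}_{n}^{(\alpha ,1+\beta)}(z,1)$ denote the same function with $\alpha$ replaced by $1+\alpha$, respectively $\beta$ replaced by $1+\beta$. *)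

theory Defs
  imports "HOL-Analysis.Analysis"
begin

text \<open>The function B_n^{(alpha,beta)}(z,1) for fixed parameter t. The index n is
nominal (the right-hand side does not depend on it), so it is omitted.\<close>
definition Bfun :: "complex \<Rightarrow> complex \<Rightarrow> complex \<Rightarrow> complex \<Rightarrow> complex" where
  "Bfun \<alpha> \<beta> t z =
     (\<Sum>m. (1/2) * (z - 1) ^ m * t ^ m / (fact m * pochhammer (1 + \<alpha>) m)) *
     (\<Sum>m. (1/2) * (z + 1) ^ m * t ^ m / (fact m * pochhammer (1 + \<beta>) m))"

end

theory Submission
  imports Defs
begin

definition cc :: "complex \<Rightarrow> complex \<Rightarrow> nat \<Rightarrow> complex" where
  "cc t a m = (1/2) * t ^ m / (fact m * pochhammer (1 + a) m)"

definition SS :: "complex \<Rightarrow> complex \<Rightarrow> complex \<Rightarrow> complex" where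
  "SS t a x = (\<Sum>m. cc t a m * x ^ m)"

lemma poch_lower:
  fixes a :: complex
  assumes "Re a > -1"
  shows "norm (pochhammer (1 + a) m) \<ge> (min (Re (1 + a)) 1) ^ m"
proof (induction m)
  case 0
  then show ?case by simp
next
  case (Suc m)
  have r: "0 < min (Re (1 + a)) 1" using assms by simp
  have "min (Re (1 + a)) 1 \<le> Re (1 + a + of_nat m)" by simp
  also have "\<dots> \<le> norm (1 + a + of_nat m)" by (rule complex_Re_le_cmod)
  finally have h: "min (Re (1 + a)) 1 \<le> norm (1 + a + of_nat m)" .
  have "(min (Re (1 + a)) 1) ^ Suc m = (min (Re (1 + a)) 1) ^ m * min (Re (1 + a)) 1"
    by simp
  also have "\<dots> \<le> norm (pochhammer (1 + a) m) * norm (1 + a + of_nat m)"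
    by (rule mult_mono[OF Suc.IH h]) (use r in auto)
  also have "\<dots> = norm (pochhammer (1 + a) (Suc m))"
    by (simp add: pochhammer_Suc norm_mult)
  finally show ?case .
qed

lemma poch_nz:
  fixes a :: complex
  assumes "Re a > -1"
  shows "pochhammer (1 + a) m \<noteq> 0"
proof -
  have r: "0 < min (Re (1 + a)) 1" using assms by simp
  have "0 < (min (Re (1 + a)) 1) ^ m" using r by simp
  also have "\<dots> \<le> norm (pochhammer (1 + a) m)" by (rule poch_lower[OF assms])
  finally show ?thesis by auto
qed

lemma cc_summable:
  fixes a :: complex
  assumes "Re a > -1"
  shows "summable (\<lambda>m. cc t a m * x ^ m)"
proof -
  define r where "r = min (Re (1 + a)) 1"
  have r: "0 < r" using assms by (simp add: r_def)
  have S: "summable (\<lambda>m. (1/2) * (inverse (fact m) * (norm t * norm x / r) ^ m))"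
    by (rule summable_mult[OF summable_exp])
  show ?thesis
  proof (rule summable_comparison_test[OF _ S], intro exI allI impI)
    fix m :: nat
    have P: "r ^ m \<le> norm (pochhammer (1 + a) m)" using poch_lower[OF assms] by (simp add: r_def)
    have rp: "0 < r ^ m" using r by simp
    have "norm (cc t a m * x ^ m) = (1/2) * (norm t * norm x) ^ m / (fact m * norm (pochhammer (1 + a) m))"
      by (simp add: cc_def norm_mult norm_divide norm_power power_mult_distrib)
    also have "\<dots> \<le> (1/2) * (norm t * norm x) ^ m / (fact m * r ^ m)"
      by (rule divide_left_mono) (use P rp in \<open>auto intro!: mult_left_mono mult_pos_pos\<close>)
    also have "\<dots> = (1/2) * (inverse (fact m) * (norm t * norm x / r) ^ m)"
      by (simp add: power_divide field_simps)
    finally show "norm (cc t a m * x ^ m) \<le> (1/2) * (inverse (fact m) * (norm t * norm x / r) ^ m)" .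
  qed
qed

lemma diffs_cc:
  fixes a :: complex
  assumes "Re a > -1"
  shows "diffs (cc t a) m = t / (1 + a) * cc t (1 + a) m"
proof -
  have n1: "1 + a \<noteq> 0"
  proof
    assume "1 + a = 0"
    then have "Re (1 + a) = 0" by simp
    then show False using assms by simp
  qed
  have n2: "pochhammer (1 + (1 + a)) m \<noteq> 0"
    using poch_nz[of "1 + a" m] assms by simp
  have n3: "(fact m :: complex) \<noteq> 0" by simp
  have n4: "(of_nat (Suc m) :: complex) \<noteq> 0" by (simp del: of_nat_Suc)
  have p: "pochhammer (1 + a) (Suc m) = (1 + a) * pochhammer (1 + (1 + a)) m"
    by (simp add: pochhammer_rec add.commute)
  have f: "(fact (Suc m) :: complex) = of_nat (Suc m) * fact m" by (rule fact_Suc)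
  have "diffs (cc t a) m = of_nat (Suc m) * ((1/2) * t ^ Suc m / ((of_nat (Suc m) * fact m) * ((1 + a) * pochhammer (1 + (1 + a)) m)))"
    unfolding diffs_def cc_def p f by simp
  also have "\<dots> = t / (1 + a) * ((1/2) * t ^ m / (fact m * pochhammer (1 + (1 + a)) m))"
    using n1 n2 n3 n4 by (simp add: divide_simps del: of_nat_Suc)
  also have "\<dots> = t / (1 + a) * cc t (1 + a) m" by (simp add: cc_def)
  finally show ?thesis .
qed

lemma SS_deriv:
  fixes a :: complex
  assumes "Re a > -1"
  shows "(SS t a has_field_derivative (t / (1 + a) * SS t (1 + a) x)) (at x)"
proof -
  have "((\<lambda>x. \<Sum>n. cc t a n * x^n) has_field_derivative (\<Sum>n. diffs (cc t a) n * x^n)) (at x)"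
    by (rule termdiffs_strong_converges_everywhere) (rule cc_summable[OF assms])
  moreover have "(\<Sum>n. diffs (cc t a) n * x^n) = t / (1 + a) * SS t (1 + a) x"
    unfolding SS_def diffs_cc[OF assms] mult.assoc
    by (rule suminf_mult[OF cc_summable]) (use assms in simp)
  ultimately show ?thesis unfolding SS_def[abs_def] by simp
qed

lemma Bfun_SS: "Bfun a b t w = SS t a (w - 1) * SS t b (w + 1)"
proof -
  have e: "\<And>c x. (\<lambda>m. (1/2) * x ^ m * t ^ m / (fact m * pochhammer (1 + c) m)) = (\<lambda>m. cc t c m * x ^ m)"
    by (simp add: cc_def mult.commute)
  show ?thesis unfolding Bfun_def SS_def e ..
qed

theorem mainTheorem5:
  fixes \<alpha> \<beta> t z :: complex
  assumes "Re \<alpha> > -1" and "Re \<beta> > -1" and "norm z < 1"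
  shows "(\<lambda>w. Bfun \<alpha> \<beta> t w) field_differentiable (at z) \<and>
         deriv (\<lambda>w. Bfun \<alpha> \<beta> t w) z - t / (1 + \<alpha>) * Bfun (1 + \<alpha>) \<beta> t z
           - t / (1 + \<beta>) * Bfun \<alpha> (1 + \<beta>) t z = 0"
proof -
  have d1: "((\<lambda>w. SS t \<alpha> (w - 1)) has_field_derivative (t / (1 + \<alpha>) * SS t (1 + \<alpha>) (z - 1))) (at z)"
    using DERIV_chain2[OF SS_deriv[OF assms(1)] DERIV_diff[OF DERIV_ident DERIV_const]] by simp
  have d2: "((\<lambda>w. SS t \<beta> (w + 1)) has_field_derivative (t / (1 + \<beta>) * SS t (1 + \<beta>) (z + 1))) (at z)"
    using DERIV_chain2[OF SS_deriv[OF assms(2)] DERIV_add[OF DERIV_ident DERIV_const]] by simp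
  have D: "((\<lambda>w. Bfun \<alpha> \<beta> t w) has_field_derivative
      (t / (1 + \<alpha>) * SS t (1 + \<alpha>) (z - 1) * SS t \<beta> (z + 1) + SS t \<alpha> (z - 1) * (t / (1 + \<beta>) * SS t (1 + \<beta>) (z + 1)))) (at z)"
    unfolding Bfun_SS by (rule DERIV_cong[OF DERIV_mult[OF d1 d2]]) (simp add: algebra_simps)
  show ?thesis
    using DERIV_imp_deriv[OF D] field_differentiable_def D
    by (auto simp: Bfun_SS algebra_simps)
qed

end
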